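(* Let $j>0$ and $R\in(0,1)$. For every $\delta>0$ small enough there is a unique function $\rho:[0,1]\to[0,\infty)$, continuous on $[0,R]$ and vanishing on $(R,1]$, such that $u:=j\delta D_0+\rho$ satisfies $$S^{(\delta,-)}_\delta(u)=u,$$ with cut point $R^{(\delta)}_{G^{\rm neum}_\delta*u}=R$. Moreover, for fixed $\delta$, $\rho$ is (pointwise) an increasing function of $R$.
   Context: $D_0$ is the Dirac delta at $0$. $G^{\rm neum}_t(r,r')$, $r,r'\in[0,1]$, is the Green function of $\partial_t\rho=\frac12\partial_r^2\rho$ on $[0,1]$ with Neumann boundary conditions: $G^{\rm neum}_t(r,r')=\sum_kG_t(r,r'_k)$, $G_t(r,r')=e^{-(r-r')^2/2t}/\sqrt{2\pi t}$, where $r'_k$ ranges over the images of $r'$ under repeated reflections of $[0,1]$ about its endpoints. For $u=cD_0+\rho$ ($c\ge0$, $\rho\in L^\infty([0,1],\mathbb R_+)$), $(G^{\rm neum}_\delta*u)(r)=cG^{\rm neum}_\delta(r,0)+\int_0^1G^{\rm neum}_\delta(r,r')\rho(r')dr'$. For a nonnegative $u$ with total mass $>j\delta$, the cut-and-paste map is $K^{(\delta)}u=j\delta D_0+\mathbf 1_{r\in[0,R^{(\delta)}_u]}u$, where $R^{(\delta)}_u$ is defined by $\int_{R^{(\delta)}_u}^1u(r)dr=j\delta$. Finally $S^{(\delta,-)}_\delta(u)=K^{(\delta)}(G^{\rm neum}_\delta*u)$. *)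

theory Defs
  imports "HOL-Analysis.Analysis"
begin

definition heat_kernel :: "real \<Rightarrow> real \<Rightarrow> real \<Rightarrow> real" where
  "heat_kernel t r r' = exp (- ((r - r')\<^sup>2) / (2 * t)) / sqrt (2 * pi * t)"

text \<open>Neumann Green function on [0,1]: sum over the images of r' under repeated
  reflections about 0 and 1, i.e. the points 2k + r' and 2k - r', k in Z.\<close>
definition green_neum :: "real \<Rightarrow> real \<Rightarrow> real \<Rightarrow> real" where
  "green_neum t r r' =
     (\<Sum>\<^sub>\<infinity> k::int. heat_kernel t r (2 * of_int k + r') + heat_kernel t r (2 * of_int k - r'))"

text \<open>A measure u = c D_0 + rho on [0,1] is represented by the pair (c, rho).
  Convolution with the Neumann Green function.\<close>
definition conv_neum :: "real \<Rightarrow> real \<times> (real \<Rightarrow> real) \<Rightarrow> real \<Rightarrow> real" where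
  "conv_neum t u r = fst u * green_neum t r 0
      + integral {0..1} (\<lambda>r'. green_neum t r r' * snd u r')"

definition cut_point :: "real \<Rightarrow> (real \<Rightarrow> real) \<Rightarrow> real" where
  "cut_point a f = (THE R. R \<in> {0..1} \<and> integral {R..1} f = a)"

definition cut_paste :: "real \<Rightarrow> (real \<Rightarrow> real) \<Rightarrow> real \<times> (real \<Rightarrow> real)" where
  "cut_paste a f = (a, (\<lambda>r. if r \<in> {0..cut_point a f} then f r else 0))"

definition S_minus :: "real \<Rightarrow> real \<Rightarrow> real \<times> (real \<Rightarrow> real) \<Rightarrow> real \<times> (real \<Rightarrow> real)" where
  "S_minus j \<delta> u = cut_paste (j * \<delta>) (conv_neum \<delta> u)"

definition fixed_profile :: "real \<Rightarrow> real \<Rightarrow> real \<Rightarrow> (real \<Rightarrow> real) \<Rightarrow> bool" where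
  "fixed_profile j \<delta> R \<rho> \<longleftrightarrow>
     (\<forall>r\<in>{0..1}. 0 \<le> \<rho> r)
   \<and> continuous_on {0..R} \<rho>
   \<and> (\<forall>r\<in>{R<..1}. \<rho> r = 0)
   \<and> integral {0..1} (conv_neum \<delta> (j * \<delta>, \<rho>)) > j * \<delta>
   \<and> cut_point (j * \<delta>) (conv_neum \<delta> (j * \<delta>, \<rho>)) = R
   \<and> fst (S_minus j \<delta> (j * \<delta>, \<rho>)) = j * \<delta>
   \<and> (\<forall>r\<in>{0..1}. snd (S_minus j \<delta> (j * \<delta>, \<rho>)) r = \<rho> r)"

end

theory Submission
  imports Defs "HOL-Probability.Distributions"
begin


definition psi :: "real \<Rightarrow> real \<Rightarrow> real" where
  "psi d s = exp (- (s\<^sup>2) / (2 * d)) / sqrt (2 * pi * d)"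

lemma heat_psi: "heat_kernel d r c = psi d (r - c)"
  by (simp add: heat_kernel_def psi_def)

lemma psi_nonneg: "0 \<le> d \<Longrightarrow> 0 \<le> psi d s"
  by (simp add: psi_def)

lemma psi_even: "psi d (- s) = psi d s"
  by (simp add: psi_def)

lemma psi_cont: "0 < d \<Longrightarrow> continuous_on A (psi d)"
  unfolding psi_def by (intro continuous_intros) auto

lemma psi_normal: "0 < d \<Longrightarrow> psi d s = normal_density 0 (sqrt d) s"
  by (simp add: psi_def normal_density_def)

lemma psi_has_int: assumes "0 < d" shows "(psi d has_integral 1) UNIV"
proof -
  have "(normal_density 0 (sqrt d) has_integral 1) UNIV"
    using has_integral_integral_lborel[OF integrable_normal_density[where \<mu>=0 and \<sigma>="sqrt d"]]
      integral_normal_density[where \<mu>=0 and \<sigma>="sqrt d"] assms by simp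
  moreover have "psi d = normal_density 0 (sqrt d)" using psi_normal[OF assms] by auto
  ultimately show ?thesis by simp
qed

definition Phi :: "real \<Rightarrow> real \<Rightarrow> real" where
  "Phi d x = (if 0 \<le> x then integral {0..x} (psi d) else - integral {x..0} (psi d))"

lemma psi_int_on: "0 < d \<Longrightarrow> psi d integrable_on {a..b}"
  by (rule integrable_continuous_interval) (rule psi_cont)

lemma Phi_diff:
  assumes d: "0 < d" and ab: "a \<le> b"
  shows "integral {a..b} (psi d) = Phi d b - Phi d a"
proof (cases "0 \<le> a")
  case True
  have "integral {0..a} (psi d) + integral {a..b} (psi d) = integral {0..b} (psi d)"
    by (rule Henstock_Kurzweil_Integration.integral_combine) (use True ab psi_int_on[OF d] in auto)
  thus ?thesis using True ab by (simp add: Phi_def)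
next
  case False
  show ?thesis
  proof (cases "b \<le> 0")
    case True
    have "integral {a..b} (psi d) + integral {b..0} (psi d) = integral {a..0} (psi d)"
      by (rule Henstock_Kurzweil_Integration.integral_combine) (use True ab psi_int_on[OF d] in auto)
    thus ?thesis using True False ab by (auto simp: Phi_def)
  next
    case False2: False
    have "integral {a..0} (psi d) + integral {0..b} (psi d) = integral {a..b} (psi d)"
      by (rule Henstock_Kurzweil_Integration.integral_combine) (use False False2 ab psi_int_on[OF d] in auto)
    thus ?thesis using False False2 ab by (auto simp: Phi_def)
  qed
qed

lemma Phi_odd: "Phi d (- x) = - Phi d x"
proof -
  have r: "integral {- b..- a} (psi d) = integral {a..b} (psi d)" for a b
    using Henstock_Kurzweil_Integration.integral_reflect_real[of b a "psi d"] by (simp only: psi_even)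
  show ?thesis
    using r[of 0 x] r[of x 0] by (auto simp: Phi_def)
qed

lemma Phi_odd': "a = - b \<Longrightarrow> Phi d a = - Phi d b"
  using Phi_odd by metis

lemma int_shift_psi:
  assumes "0 < d"
  shows "integral {0..1} (\<lambda>r. psi d (r - c)) = Phi d (1 - c) - Phi d (- c)"
proof -
  have "integral {- c - (- c)..1 - c - (- c)} (\<lambda>r. psi d (r + - c)) = integral {- c..1 - c} (psi d)"
    by (rule integral_shift_real_ivl)
  also have "\<dots> = Phi d (1 - c) - Phi d (- c)" by (rule Phi_diff) (use assms in auto)
  finally show ?thesis by simp
qed

lemma int_set_Suc:
  "{- int (Suc n)..int (Suc n)} = insert (int (Suc n)) (insert (- int (Suc n)) {- int n..int n})"
  by auto

lemma telescope:
  assumes pair: "\<And>m. F m + F (- m) = Phi d (2*m + 1 - x) - Phi d (2*m - 1 - x)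
                     + Phi d (1 - 2*m - x) - Phi d (- 2*m - 1 - x)"
    and zero: "F 0 = Phi d (1 - x) - Phi d (- 1 - x)"
  shows "(\<Sum>k\<in>{- int N..int N}. F (real_of_int k)) = Phi d (2 * real N + 1 - x) - Phi d (- 2 * real N - 1 - x)"
proof (induction N)
  case 0
  then show ?case using zero by simp
next
  case (Suc n)
  have "(\<Sum>k\<in>{- int (Suc n)..int (Suc n)}. F (real_of_int k))
       = F (real n + 1) + F (- (real n + 1)) + (\<Sum>k\<in>{- int n..int n}. F (real_of_int k))"
    unfolding int_set_Suc by (subst sum.insert; simp add: algebra_simps)+
  also have "\<dots> = Phi d (2 * real (Suc n) + 1 - x) - Phi d (- 2 * real (Suc n) - 1 - x)"
    unfolding Suc pair by (simp add: algebra_simps) (rule arg_cong[where f="Phi d"], linarith)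
  finally show ?case .
qed




definition ak :: "real \<Rightarrow> int \<Rightarrow> real \<Rightarrow> real \<Rightarrow> real" where
  "ak d k r r' = heat_kernel d r (2 * of_int k + r') + heat_kernel d r (2 * of_int k - r')"

lemma green_ak: "green_neum d r r' = (\<Sum>\<^sub>\<infinity>k. ak d k r r')"
  by (simp add: green_neum_def ak_def)

definition Mb :: "real \<Rightarrow> int \<Rightarrow> real" where
  "Mb d k = 2 * (exp ((1 - real_of_int \<bar>k\<bar>) / d) / sqrt (2 * pi * d))"

lemma sq_bound:
  fixes k :: int and s :: real
  assumes "\<bar>s + 2 * of_int k\<bar> \<le> 2"
  shows "2 * real_of_int \<bar>k\<bar> - 2 \<le> s\<^sup>2"
proof (cases "\<bar>k\<bar> = 0")
  case True
  have "0 \<le> s\<^sup>2" by simp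
  moreover have "real_of_int \<bar>k\<bar> = 0" using True by simp
  ultimately show ?thesis by linarith
next
  case False
  define y where "y = 2 * real_of_int \<bar>k\<bar> - 2"
  have y0: "0 \<le> y" using False by (simp add: y_def)
  have ys: "y \<le> \<bar>s\<bar>" using assms unfolding y_def by (cases "k \<ge> 0") auto
  have "y \<le> y\<^sup>2"
  proof (cases "\<bar>k\<bar> = 1")
    case True then show ?thesis by (simp add: y_def)
  next
    case False2: False
    with False have "\<bar>k\<bar> \<ge> 2" by linarith
    hence "y \<ge> 2" by (simp add: y_def)
    thus ?thesis by (simp add: power2_eq_square)
  qed
  also have "y\<^sup>2 \<le> \<bar>s\<bar>\<^sup>2" by (rule power_mono[OF ys y0])
  finally show ?thesis by (simp add: y_def)
qed

lemma psi_bound: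
  assumes d: "0 < d" and "2 * real_of_int \<bar>k\<bar> - 2 \<le> s\<^sup>2"
  shows "psi d s \<le> exp ((1 - real_of_int \<bar>k\<bar>) / d) / sqrt (2 * pi * d)"
proof -
  have e: "(1 - real_of_int \<bar>k\<bar>) / d = (2 - 2 * real_of_int \<bar>k\<bar>) / (2 * d)"
    using d by (simp add: field_simps)
  have "- (s\<^sup>2) / (2 * d) \<le> (2 - 2 * real_of_int \<bar>k\<bar>) / (2 * d)"
    by (rule divide_right_mono) (use assms in auto)
  hence "exp (- (s\<^sup>2) / (2 * d)) \<le> exp ((1 - real_of_int \<bar>k\<bar>) / d)" unfolding e by simp
  thus ?thesis unfolding psi_def by (rule divide_right_mono) (use d in simp)
qed

lemma ak_bound:
  assumes d: "0 < d" and r: "r \<in> {0..1}" and r': "r' \<in> {0..1}"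
  shows "\<bar>ak d k r r'\<bar> \<le> Mb d k"
proof -
  have 1: "psi d (r - (2 * of_int k + r')) \<le> exp ((1 - real_of_int \<bar>k\<bar>) / d) / sqrt (2 * pi * d)"
    by (rule psi_bound[OF d sq_bound]) (use r r' in auto)
  have 2: "psi d (r - (2 * of_int k - r')) \<le> exp ((1 - real_of_int \<bar>k\<bar>) / d) / sqrt (2 * pi * d)"
    by (rule psi_bound[OF d sq_bound]) (use r r' in auto)
  have "0 \<le> ak d k r r'" unfolding ak_def heat_psi using psi_nonneg d by (simp add: add_nonneg_nonneg)
  thus ?thesis using 1 2 unfolding Mb_def ak_def heat_psi by simp
qed

lemma ak_nonneg: "0 < d \<Longrightarrow> 0 \<le> ak d k r r'"
  unfolding ak_def heat_psi using psi_nonneg by (simp add: add_nonneg_nonneg)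

lemma geom_int_summable:
  fixes q :: real assumes q: "0 \<le> q" "q < 1"
  shows "(\<lambda>k::int. q ^ nat \<bar>k\<bar>) summable_on UNIV"
proof -
  have s: "(\<lambda>n::nat. q ^ n) summable_on UNIV"
    by (rule summable_nonneg_imp_summable_on) (use q in auto)
  have 1: "(\<lambda>k::int. q ^ nat \<bar>k\<bar>) summable_on (range int)"
    by (subst summable_on_reindex) (use s in \<open>auto simp: o_def\<close>)
  have 2: "(\<lambda>k::int. q ^ nat \<bar>k\<bar>) summable_on (range (\<lambda>n. - int n))"
    by (subst summable_on_reindex) (use s in \<open>auto simp: o_def inj_on_def\<close>)
  have "UNIV = range int \<union> range (\<lambda>n. - int n)"
  proof -
    { fix x :: int
      have "x \<in> range int \<union> range (\<lambda>n. - int n)"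
      proof (cases "x \<ge> 0")
        case True then have "x = int (nat x)" by simp
        thus ?thesis by blast
      next
        case False then have "x = - int (nat (- x))" by simp
        thus ?thesis by blast
      qed }
    thus ?thesis by blast
  qed
  thus ?thesis using summable_on_union[OF 1 2] by simp
qed

lemma Mb_summable: assumes d: "0 < d" shows "Mb d summable_on UNIV"
proof -
  have e: "Mb d k = (2 * exp (1 / d) / sqrt (2 * pi * d)) * exp (- 1 / d) ^ nat \<bar>k\<bar>" for k
  proof -
    have "exp ((1 - real_of_int \<bar>k\<bar>) / d) = exp (1 / d) * exp (real (nat \<bar>k\<bar>) * (- 1 / d))"
      by (simp add: exp_add[symmetric] diff_divide_distrib)
    also have "\<dots> = exp (1 / d) * exp (- 1 / d) ^ nat \<bar>k\<bar>" by (simp only: exp_of_nat_mult)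
    finally show ?thesis unfolding Mb_def by simp
  qed
  have "(\<lambda>k::int. exp (- 1 / d) ^ nat \<bar>k\<bar>) summable_on UNIV"
    by (rule geom_int_summable) (use d in auto)
  hence "(\<lambda>k::int. (2 * exp (1 / d) / sqrt (2 * pi * d)) * exp (- 1 / d) ^ nat \<bar>k\<bar>) summable_on UNIV"
    by (rule summable_on_cmult_right)
  thus ?thesis unfolding e[abs_def] .
qed

lemma ak_summable:
  assumes d: "0 < d" and r: "r \<in> {0..1}" and r': "r' \<in> {0..1}"
  shows "(\<lambda>k. ak d k r r') summable_on UNIV"
  by (rule summable_on_comparison_test[OF Mb_summable[OF d]])
     (use ak_bound[OF d r r'] ak_nonneg[OF d] in auto)

lemma ak_cont: "0 < d \<Longrightarrow> continuous_on A (\<lambda>y. ak d k (f y) (g y))"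
  if "continuous_on A f" "continuous_on A g" for f g :: "'a::topological_space \<Rightarrow> real"
  unfolding ak_def heat_psi psi_def using that by (intro continuous_intros) auto

lemma unif2:
  assumes d: "0 < d"
  shows "uniform_limit ({0..1}\<times>{0..1}) (\<lambda>X y. \<Sum>k\<in>X. ak d k (fst y) (snd y))
           (\<lambda>y. green_neum d (fst y) (snd y)) (finite_subsets_at_top UNIV)"
  unfolding green_ak
  by (rule Weierstrass_m_test_general[OF _ Mb_summable[OF d]]) (use ak_bound[OF d] in auto)

lemma g_cont:
  assumes d: "0 < d"
  shows "continuous_on ({0..1}\<times>{0..1}) (\<lambda>y. green_neum d (fst y) (snd y))"
proof (rule uniform_limit_theorem[OF _ unif2[OF d]])
  show "\<forall>\<^sub>F X in finite_subsets_at_top UNIV. continuous_on ({0..1}\<times>{0..1}) (\<lambda>y. \<Sum>k\<in>X. ak d k (fst y) (snd y))"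
    by (intro always_eventually allI continuous_on_sum ak_cont[OF _ _ d] continuous_intros)
qed simp

lemma unif_r:
  assumes d: "0 < d" and r': "r' \<in> {0..1}"
  shows "uniform_limit {0..1} (\<lambda>X r. \<Sum>k\<in>X. ak d k r r') (\<lambda>r. green_neum d r r') (finite_subsets_at_top UNIV)"
  unfolding green_ak
  by (rule Weierstrass_m_test_general[OF _ Mb_summable[OF d]]) (use ak_bound[OF d] r' in auto)

lemma unif_r':
  assumes d: "0 < d" and r: "r \<in> {0..1}"
  shows "uniform_limit {0..1} (\<lambda>X r'. \<Sum>k\<in>X. ak d k r r') (\<lambda>r'. green_neum d r r') (finite_subsets_at_top UNIV)"
  unfolding green_ak
  by (rule Weierstrass_m_test_general[OF _ Mb_summable[OF d]]) (use ak_bound[OF d] r in auto)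

definition c0 :: "real \<Rightarrow> real" where "c0 d = exp (- 1 / (2 * d)) / sqrt (2 * pi * d)"

lemma c0_pos: "0 < d \<Longrightarrow> 0 < c0 d" by (simp add: c0_def)

lemma g_lower:
  assumes d: "0 < d" and r: "r \<in> {0..1}" and r': "r' \<in> {0..1}"
  shows "c0 d \<le> green_neum d r r'"
proof -
  have "\<bar>r - r'\<bar> \<le> 1" using r r' by auto
  hence "\<bar>r - r'\<bar>\<^sup>2 \<le> 1" by (intro power_le_one) auto
  hence "(r - r')\<^sup>2 \<le> 1" by simp
  hence "- 1 / (2 * d) \<le> - ((r - r')\<^sup>2) / (2 * d)" using d by (intro divide_right_mono) auto
  hence "c0 d \<le> psi d (r - r')" unfolding c0_def psi_def using d by (intro divide_right_mono) auto
  also have "\<dots> \<le> ak d 0 r r'" unfolding ak_def heat_psi using psi_nonneg[of d] d by simp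
  also have "\<dots> = (\<Sum>\<^sub>\<infinity>k\<in>{0}. ak d k r r')" by simp
  also have "\<dots> \<le> (\<Sum>\<^sub>\<infinity>k. ak d k r r')"
    by (rule infsum_mono2) (use ak_summable[OF d r r'] ak_nonneg[OF d] in auto)
  finally show ?thesis unfolding green_ak .
qed

lemma g_nonneg: "0 < d \<Longrightarrow> 0 \<le> green_neum d r r'"
  unfolding green_ak by (rule infsum_nonneg) (rule ak_nonneg)




definition F1 :: "real \<Rightarrow> real \<Rightarrow> real \<Rightarrow> real" where
  "F1 d x m = Phi d (1 - (2*m + x)) - Phi d (- (2*m + x)) + Phi d (1 - (2*m - x)) - Phi d (- (2*m - x))"

definition F2 :: "real \<Rightarrow> real \<Rightarrow> real \<Rightarrow> real" where
  "F2 d x m = Phi d (1 - (x - 2*m)) - Phi d (- (x - 2*m)) + Phi d (1 - (2*m - x)) - Phi d (- (2*m - x))"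

lemma F1_pair: "F1 d x m + F1 d x (- m) = Phi d (2*m + 1 - x) - Phi d (2*m - 1 - x)
                     + Phi d (1 - 2*m - x) - Phi d (- 2*m - 1 - x)"
  unfolding F1_def
  using Phi_odd[of d "2*m - 1 - x"] Phi_odd[of d "2*m - x"] Phi_odd[of d "- 2*m - 1 - x"] Phi_odd[of d "- 2*m - x"]
  by (smt (verit))

lemma F1_zero: "F1 d x 0 = Phi d (1 - x) - Phi d (- 1 - x)"
  unfolding F1_def using Phi_odd[of d "- 1 - x"] Phi_odd[of d "- x"] by (smt (verit))

lemma F2_pair: "F2 d x m + F2 d x (- m) = Phi d (2*m + 1 - x) - Phi d (2*m - 1 - x)
                     + Phi d (1 - 2*m - x) - Phi d (- 2*m - 1 - x)"
  unfolding F2_def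
  using Phi_odd[of d "2*m - 1 - x"] Phi_odd[of d "2*m - x"] Phi_odd[of d "- 2*m - 1 - x"] Phi_odd[of d "- 2*m - x"]
  by (smt (verit))

lemma F2_zero: "F2 d x 0 = Phi d (1 - x) - Phi d (- 1 - x)"
  unfolding F2_def using Phi_odd[of d "- 1 - x"] Phi_odd[of d "- x"] by (smt (verit))

lemma psi_shift_int: "0 < d \<Longrightarrow> (\<lambda>r. psi d (r - c)) integrable_on {a..b}"
  by (rule integrable_continuous_interval) (unfold psi_def, intro continuous_intros, auto)

lemma int_ak_r:
  assumes d: "0 < d"
  shows "integral {0..1} (\<lambda>r. ak d k r x) = F1 d x (of_int k)"
proof -
  have "integral {0..1} (\<lambda>r. ak d k r x) =
        integral {0..1} (\<lambda>r. psi d (r - (2 * of_int k + x))) + integral {0..1} (\<lambda>r. psi d (r - (2 * of_int k - x)))"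
    unfolding ak_def heat_psi
    by (rule Henstock_Kurzweil_Integration.integral_add) (use psi_shift_int[OF d] in auto)
  thus ?thesis unfolding int_shift_psi[OF d] F1_def by simp
qed

lemma int_ak_r':
  assumes d: "0 < d"
  shows "integral {0..1} (\<lambda>r'. ak d k x r') = F2 d x (of_int k)"
proof -
  have e: "ak d k x r' = psi d (r' - (x - 2 * of_int k)) + psi d (r' - (2 * of_int k - x))" for r'
  proof -
    have "psi d (x - (2 * of_int k + r')) = psi d (- (r' - (x - 2 * of_int k)))" by (simp add: algebra_simps)
    thus ?thesis unfolding ak_def heat_psi psi_even by (simp add: algebra_simps)
  qed
  have "integral {0..1} (\<lambda>r'. ak d k x r') =
        integral {0..1} (\<lambda>r. psi d (r - (x - 2 * of_int k))) + integral {0..1} (\<lambda>r. psi d (r - (2 * of_int k - x)))"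
    unfolding e
    by (rule Henstock_Kurzweil_Integration.integral_add) (use psi_shift_int[OF d] in auto)
  thus ?thesis unfolding int_shift_psi[OF d] F2_def by simp
qed

lemma psi_lim:
  assumes d: "0 < d"
  shows "(\<lambda>N. integral {- 2 * real N - 1 - x .. 2 * real N + 1 - x} (psi d)) \<longlonglongrightarrow> 1"
proof (rule LIMSEQ_I)
  fix e :: real assume e: "0 < e"
  from psi_has_int[OF d] have "\<forall>e>0. \<exists>B>0. \<forall>a b. ball 0 B \<subseteq> cbox a b \<longrightarrow>
            norm (integral (cbox a b) (\<lambda>x. if x \<in> UNIV then psi d x else 0) - 1) < e"
    unfolding has_integral_alt' by blast
  then obtain B where B: "B > 0" "\<And>a b. ball 0 B \<subseteq> {a..b} \<Longrightarrow> norm (integral {a..b} (psi d) - 1) < e"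
    using e by (auto simp: cbox_interval)
  show "\<exists>no. \<forall>n\<ge>no. norm (integral {- 2 * real n - 1 - x .. 2 * real n + 1 - x} (psi d) - 1) < e"
  proof (intro exI allI impI)
    fix n assume n: "n \<ge> nat \<lceil>B + \<bar>x\<bar>\<rceil>"
    hence "real n \<ge> B + \<bar>x\<bar>" by linarith
    hence "ball 0 B \<subseteq> {- 2 * real n - 1 - x .. 2 * real n + 1 - x}"
      using B(1) by (auto simp: dist_real_def)
    thus "norm (integral {- 2 * real n - 1 - x .. 2 * real n + 1 - x} (psi d) - 1) < e" by (rule B(2))
  qed
qed

lemma int_one:
  fixes A :: "int \<Rightarrow> real \<Rightarrow> real"
  assumes d: "0 < d"
    and ul: "uniform_limit {0..1} (\<lambda>X t. \<Sum>k\<in>X. A k t) G (finite_subsets_at_top UNIV)"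
    and cont: "\<And>k. continuous_on {0..1} (A k)"
    and ints: "\<And>k. integral {0..1} (A k) = F (of_int k)"
    and pair: "\<And>m. F m + F (- m) = Phi d (2*m + 1 - x) - Phi d (2*m - 1 - x)
                     + Phi d (1 - 2*m - x) - Phi d (- 2*m - 1 - x)"
    and zero: "F 0 = Phi d (1 - x) - Phi d (- 1 - x)"
  shows "integral {0..1} G = 1"
proof -
  obtain I J where I: "\<And>X. ((\<lambda>t. \<Sum>k\<in>X. A k t) has_integral I X) {0..1}"
    and J: "(G has_integral J) {0..1}" and lim: "(I \<longlongrightarrow> J) (finite_subsets_at_top UNIV)"
    by (rule uniform_limit_integral[OF ul]) (use cont in \<open>auto intro!: continuous_on_sum\<close>)
  have ub: "filterlim uminus (at_bot::int filter) at_top"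
    by (simp add: filterlim_at_bot minus_le_iff)
  have fl: "filterlim (\<lambda>N::nat. {- int N..int N}) (finite_subsets_at_top UNIV) sequentially"
    by (rule filterlim_atLeastAtMost_at_bot_at_top)
       (use filterlim_compose[OF ub filterlim_int_sequentially] filterlim_int_sequentially in auto)
  have l1: "(\<lambda>N. I {- int N..int N}) \<longlonglongrightarrow> J" by (rule filterlim_compose[OF lim fl])
  have IN: "I {- int N..int N} = integral {- 2 * real N - 1 - x .. 2 * real N + 1 - x} (psi d)" for N
  proof -
    have "I {- int N..int N} = integral {0..1} (\<lambda>t. \<Sum>k\<in>{- int N..int N}. A k t)"
      using integral_unique[OF I[of "{- int N..int N}"]] by simp
    also have "\<dots> = (\<Sum>k\<in>{- int N..int N}. integral {0..1} (A k))"
      by (rule Henstock_Kurzweil_Integration.integral_sum) (use cont in \<open>auto intro: integrable_continuous_interval\<close>)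
    also have "\<dots> = (\<Sum>k\<in>{- int N..int N}. F (real_of_int k))" by (simp add: ints)
    also have "\<dots> = Phi d (2 * real N + 1 - x) - Phi d (- 2 * real N - 1 - x)"
      by (rule telescope[OF pair zero])
    also have "\<dots> = integral {- 2 * real N - 1 - x .. 2 * real N + 1 - x} (psi d)"
      by (rule Phi_diff[symmetric]) (use d in auto)
    finally show ?thesis .
  qed
  have "J = 1" using l1 psi_lim[OF d, of x] unfolding IN by (rule LIMSEQ_unique)
  thus ?thesis using J by (simp add: integral_unique)
qed

lemma g_int_r:
  assumes d: "0 < d" and x: "x \<in> {0..1}"
  shows "integral {0..1} (\<lambda>r. green_neum d r x) = 1"
  by (rule int_one[OF d unif_r[OF d x] _ int_ak_r[OF d] F1_pair F1_zero])
     (intro ak_cont[OF _ _ d] continuous_intros)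

lemma g_int_r':
  assumes d: "0 < d" and x: "x \<in> {0..1}"
  shows "integral {0..1} (\<lambda>r'. green_neum d x r') = 1"
  by (rule int_one[OF d unif_r'[OF d x] _ int_ak_r'[OF d] F2_pair F2_zero])
     (intro ak_cont[OF _ _ d] continuous_intros)




lemma gcomp:
  assumes d: "0 < d" and f: "continuous_on S f" and g: "continuous_on S g"
    and fg: "\<And>y. y \<in> S \<Longrightarrow> f y \<in> {0..1} \<and> g y \<in> {0..1}"
  shows "continuous_on S (\<lambda>y. green_neum d (f y) (g y))"
proof -
  have 1: "continuous_on S (\<lambda>y. (f y, g y))" by (intro continuous_on_Pair f g)
  have 2: "(\<lambda>y. (f y, g y)) ` S \<subseteq> {0..1}\<times>{0..1}" using fg by auto
  show ?thesis using continuous_on_compose2[OF g_cont[OF d] 1 2] by simp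
qed

lemma Kbound:
  assumes d: "0 < d" and R: "0 \<le> R" "R \<le> 1" and r: "r \<in> {0..1}"
  shows "integral {0..R} (\<lambda>r'. green_neum d r r') \<le> 1 - c0 d * (1 - R)"
proof -
  have ci: "continuous_on {0..1} (\<lambda>r'. green_neum d r r')"
    by (rule gcomp[OF d]) (use r in \<open>auto intro: continuous_intros\<close>)
  hence int: "(\<lambda>r'. green_neum d r r') integrable_on {0..1}" by (rule integrable_continuous_interval)
  have "integral {0..R} (\<lambda>r'. green_neum d r r') + integral {R..1} (\<lambda>r'. green_neum d r r') = 1"
    using Henstock_Kurzweil_Integration.integral_combine[OF R int] g_int_r'[OF d r] by simp
  moreover have "integral {R..1} (\<lambda>r'. c0 d) \<le> integral {R..1} (\<lambda>r'. green_neum d r r')"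
    by (rule Henstock_Kurzweil_Integration.integral_le)
       (use integrable_on_subinterval[OF int, of R 1] R r g_lower[OF d r] in auto)
  moreover have "integral {R..1} (\<lambda>r'. c0 d) = (1 - R) * c0 d" using R by simp
  ultimately show ?thesis by (simp add: algebra_simps)
qed

lemma minprin:
  assumes d: "0 < d" and R: "0 \<le> R" "R < 1" and cD: "continuous_on {0..R} D"
    and le: "\<And>r. r \<in> {0..R} \<Longrightarrow> integral {0..R} (\<lambda>r'. green_neum d r r' * D r') \<le> D r"
  shows "\<And>r. r \<in> {0..R} \<Longrightarrow> 0 \<le> D r"
proof (rule ccontr)
  fix r assume r: "r \<in> {0..R}" and neg: "\<not> 0 \<le> D r"
  obtain r0 where r0: "r0 \<in> {0..R}" and mn: "\<And>y. y \<in> {0..R} \<Longrightarrow> D r0 \<le> D y"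
    using continuous_attains_inf[OF compact_Icc _ cD] R by auto
  define m where "m = D r0"
  have m: "m < 0" using mn[OF r] neg by (simp add: m_def)
  define q where "q = 1 - c0 d * (1 - R)"
  have q: "q < 1" using c0_pos[OF d] R by (simp add: q_def)
  have r01: "r0 \<in> {0..1}" using r0 R by auto
  have Kq: "integral {0..R} (\<lambda>r'. green_neum d r0 r') \<le> q"
    unfolding q_def by (rule Kbound[OF d R(1) _ r01]) (use R in auto)
  have cg: "continuous_on {0..R} (\<lambda>r'. green_neum d r0 r')"
    by (rule gcomp[OF d]) (use r01 R in \<open>auto intro: continuous_intros\<close>)
  have "integral {0..R} (\<lambda>r'. green_neum d r0 r' * m) \<le> integral {0..R} (\<lambda>r'. green_neum d r0 r' * D r')"
  proof (rule Henstock_Kurzweil_Integration.integral_le)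
    show "(\<lambda>r'. green_neum d r0 r' * m) integrable_on {0..R}"
      by (rule integrable_continuous_interval) (intro continuous_intros cg)
    show "(\<lambda>r'. green_neum d r0 r' * D r') integrable_on {0..R}"
      by (rule integrable_continuous_interval) (intro continuous_intros cg cD)
    fix x assume "x \<in> {0..R}"
    thus "green_neum d r0 x * m \<le> green_neum d r0 x * D x"
      using mn[of x] g_nonneg[OF d] by (auto simp: m_def intro: mult_left_mono)
  qed
  moreover have "integral {0..R} (\<lambda>r'. green_neum d r0 r' * m) = integral {0..R} (\<lambda>r'. green_neum d r0 r') * m"
    by simp
  moreover have "integral {0..R} (\<lambda>r'. green_neum d r0 r') * m \<ge> q * m"
    using Kq m by (simp add: mult_right_mono_neg)
  moreover have "q * m > m" using q m by (simp add: mult_less_cancel_right)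
  ultimately have "D r0 > m" using le[OF r0] by linarith
  thus False by (simp add: m_def)
qed

lemma int_cut:
  assumes d: "0 < d" and R: "0 \<le> R" "R \<le> 1" and r: "r \<in> {0..1}"
    and c: "continuous_on {0..R} \<rho>" and z: "\<And>r. r \<in> {R<..1} \<Longrightarrow> \<rho> r = 0"
  shows "integral {0..1} (\<lambda>r'. green_neum d r r' * \<rho> r') = integral {0..R} (\<lambda>r'. green_neum d r r' * \<rho> r')"
proof -
  have "(\<lambda>r'. green_neum d r r' * \<rho> r') integrable_on {0..R}"
    by (rule integrable_continuous_interval)
       (intro continuous_intros c gcomp[OF d], use r R in auto)
  hence h1: "((\<lambda>r'. green_neum d r r' * \<rho> r') has_integral integral {0..R} (\<lambda>r'. green_neum d r r' * \<rho> r')) {0..R}"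
    by (rule integrable_integral)
  have h2: "((\<lambda>r'. green_neum d r r' * \<rho> r') has_integral 0) {R..1}"
    by (rule has_integral_spike_finite[where S="{R}" and f="\<lambda>_. 0"]) (use z in auto)
  show ?thesis
    using has_integral_combine[OF R h1 h2] by (simp add: integral_unique)
qed

lemma fp_eq:
  assumes d: "0 < d" and R: "0 < R" "R < 1" and fp: "fixed_profile j d R \<rho>"
  shows "\<And>r. r \<in> {0..R} \<Longrightarrow> \<rho> r = j * d * green_neum d r 0 + integral {0..R} (\<lambda>r'. green_neum d r r' * \<rho> r')"
proof -
  fix r assume r: "r \<in> {0..R}"
  have c: "continuous_on {0..R} \<rho>" and z: "\<And>r. r \<in> {R<..1} \<Longrightarrow> \<rho> r = 0"
    and cp: "cut_point (j * d) (conv_neum d (j * d, \<rho>)) = R"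
    and sn: "\<And>r. r \<in> {0..1} \<Longrightarrow> snd (S_minus j d (j * d, \<rho>)) r = \<rho> r"
    using fp unfolding fixed_profile_def by auto
  have r1: "r \<in> {0..1}" using r R by auto
  have "\<rho> r = conv_neum d (j * d, \<rho>) r"
    using sn[OF r1] r unfolding S_minus_def cut_paste_def cp by simp
  also have "\<dots> = j * d * green_neum d r 0 + integral {0..R} (\<lambda>r'. green_neum d r r' * \<rho> r')"
    unfolding conv_neum_def using int_cut[OF d _ _ r1 c z] R by simp
  finally show "\<rho> r = j * d * green_neum d r 0 + integral {0..R} (\<lambda>r'. green_neum d r r' * \<rho> r')" .
qed

lemma compare:
  assumes j: "0 < j" and d: "0 < d" and R: "0 < R1" "R1 \<le> R2" "R2 < 1"
    and f1: "fixed_profile j d R1 \<rho>1" and f2: "fixed_profile j d R2 \<rho>2"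
  shows "\<And>r. r \<in> {0..1} \<Longrightarrow> \<rho>1 r \<le> \<rho>2 r"
proof -
  have c1: "continuous_on {0..R1} \<rho>1" and z1: "\<And>r. r \<in> {R1<..1} \<Longrightarrow> \<rho>1 r = 0"
    using f1 unfolding fixed_profile_def by auto
  have c2: "continuous_on {0..R2} \<rho>2" and nn2: "\<And>r. r \<in> {0..1} \<Longrightarrow> 0 \<le> \<rho>2 r"
    using f2 unfolding fixed_profile_def by auto
  have c2': "continuous_on {0..R1} \<rho>2" using continuous_on_subset[OF c2] R by auto
  note e1 = fp_eq[OF d _ _ f1] and e2 = fp_eq[OF d _ _ f2]
  have "0 \<le> \<rho>2 r - \<rho>1 r" if r: "r \<in> {0..R1}" for r
  proof (rule minprin[OF d _ _ _ _ r, of "\<lambda>r. \<rho>2 r - \<rho>1 r"])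
    show "0 \<le> R1" "R1 < 1" using R by auto
    show "continuous_on {0..R1} (\<lambda>r. \<rho>2 r - \<rho>1 r)" by (intro continuous_intros c1 c2')
    fix x assume x: "x \<in> {0..R1}"
    have x1: "x \<in> {0..1}" using x R by auto
    have i1: "(\<lambda>r'. green_neum d x r' * \<rho>1 r') integrable_on {0..R1}"
      by (rule integrable_continuous_interval) (intro continuous_intros c1 gcomp[OF d], use x1 R in auto)
    have i2: "(\<lambda>r'. green_neum d x r' * \<rho>2 r') integrable_on {0..R2}"
      by (rule integrable_continuous_interval) (intro continuous_intros c2 gcomp[OF d], use x1 R in auto)
    have i2': "(\<lambda>r'. green_neum d x r' * \<rho>2 r') integrable_on {0..R1}"
      using integrable_on_subinterval[OF i2] R by auto
    have i2'': "(\<lambda>r'. green_neum d x r' * \<rho>2 r') integrable_on {R1..R2}"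
      using integrable_on_subinterval[OF i2] R by auto
    have split: "integral {0..R2} (\<lambda>r'. green_neum d x r' * \<rho>2 r') =
       integral {0..R1} (\<lambda>r'. green_neum d x r' * \<rho>2 r') + integral {R1..R2} (\<lambda>r'. green_neum d x r' * \<rho>2 r')"
      using Henstock_Kurzweil_Integration.integral_combine[OF _ _ i2, of R1] R by simp
    have pos: "0 \<le> integral {R1..R2} (\<lambda>r'. green_neum d x r' * \<rho>2 r')"
      by (rule Henstock_Kurzweil_Integration.integral_nonneg[OF i2''])
         (use nn2 g_nonneg[OF d] R in auto)
    have "integral {0..R1} (\<lambda>r'. green_neum d x r' * (\<rho>2 r' - \<rho>1 r')) =
          integral {0..R1} (\<lambda>r'. green_neum d x r' * \<rho>2 r') - integral {0..R1} (\<lambda>r'. green_neum d x r' * \<rho>1 r')"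
      unfolding right_diff_distrib by (rule Henstock_Kurzweil_Integration.integral_diff[OF i2' i1])
    moreover have "\<rho>1 x = j * d * green_neum d x 0 + integral {0..R1} (\<lambda>r'. green_neum d x r' * \<rho>1 r')"
      by (rule e1) (use x R in auto)
    moreover have "\<rho>2 x = j * d * green_neum d x 0 + integral {0..R2} (\<lambda>r'. green_neum d x r' * \<rho>2 r')"
      by (rule e2) (use x R in auto)
    ultimately show "integral {0..R1} (\<lambda>r'. green_neum d x r' * (\<rho>2 r' - \<rho>1 r')) \<le> \<rho>2 x - \<rho>1 x"
      using split pos by linarith
  qed
  thus "\<And>r. r \<in> {0..1} \<Longrightarrow> \<rho>1 r \<le> \<rho>2 r"
    using z1 nn2 by (metis atLeastAtMost_iff diff_ge_0_iff_ge greaterThanAtMost_iff linorder_not_le)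
qed




lemma intcont:
  assumes d: "0 < d" and R: "0 \<le> R" "R \<le> 1" and c: "continuous_on {0..R} \<rho>"
  shows "continuous_on {0..1} (\<lambda>r. integral {0..R} (\<lambda>r'. green_neum d r r' * \<rho> r'))"
proof -
  have c1: "continuous_on ({0..1} \<times> {0..R}) (\<lambda>y. green_neum d (fst y) (snd y))"
    by (rule gcomp[OF d]) (use R in \<open>auto intro: continuous_intros\<close>)
  have c2: "continuous_on ({0..1} \<times> {0..R}) (\<lambda>y. \<rho> (snd y))"
    by (rule continuous_on_compose2[OF c continuous_on_snd]) auto
  have "continuous_on ({0..1} \<times> cbox 0 R) (\<lambda>(x, t). green_neum d x t * \<rho> t)"
    using continuous_on_mult[OF c1 c2] by (simp add: case_prod_beta cbox_interval)
  from integral_continuous_on_param[OF this] show ?thesis by (simp add: cbox_interval)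
qed

lemma int_pos_lower:
  fixes u v c :: real
  assumes "u \<le> v" and "f integrable_on {u..v}" and "\<And>x. x \<in> {u..v} \<Longrightarrow> c \<le> f x"
  shows "(v - u) * c \<le> integral {u..v} f"
proof -
  have "integral {u..v} (\<lambda>x. c) \<le> integral {u..v} f"
    by (rule Henstock_Kurzweil_Integration.integral_le) (use assms in auto)
  thus ?thesis using assms(1) by simp
qed

lemma exists_fp:
  assumes j: "0 < j" and d: "0 < d" and R: "0 < R" "R < 1"
  shows "\<exists>\<rho>. fixed_profile j d R \<rho>"
proof -
  define a where "a = j * d"
  have a: "0 < a" using j d by (simp add: a_def)
  define cl where "cl r = max 0 (min R r)" for r :: real
  have cl: "cl r \<in> {0..R}" for r using R by (auto simp: cl_def)
  have clid: "r \<in> {0..R} \<Longrightarrow> cl r = r" for r by (auto simp: cl_def)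
  have clc: "continuous_on UNIV cl" unfolding cl_def by (intro continuous_intros)
  define Psi where "Psi h r = a * green_neum d r 0 + integral {0..R} (\<lambda>r'. green_neum d r r' * apply_bcontfun h r')"
    for h :: "real \<Rightarrow>\<^sub>C real" and r
  have Psic: "continuous_on {0..R} (Psi h)" for h
  proof -
    have "continuous_on {0..1} (Psi h)" unfolding Psi_def
      by (intro continuous_intros gcomp[OF d] intcont[OF d]) (use R in auto)
    thus ?thesis by (rule continuous_on_subset) (use R in auto)
  qed
  have inb: "(\<lambda>r. Psi h (cl r)) \<in> bcontfun" for h
  proof -
    have cc: "continuous_on UNIV (\<lambda>r. Psi h (cl r))"
      by (rule continuous_on_compose2[OF Psic[of h] clc]) (use cl in auto)
    have "range (\<lambda>r. Psi h (cl r)) \<subseteq> Psi h ` {0..R}" using cl by auto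
    moreover have "bounded (Psi h ` {0..R})"
      by (intro compact_imp_bounded compact_continuous_image Psic compact_Icc)
    ultimately have "bounded (range (\<lambda>r. Psi h (cl r)))" by (rule bounded_subset[rotated])
    thus ?thesis using cc by (simp add: bcontfun_def)
  qed
  define T where "T h = Bcontfun (\<lambda>r. Psi h (cl r))" for h
  have Tap: "apply_bcontfun (T h) r = Psi h (cl r)" for h r
    unfolding T_def using Bcontfun_inverse[OF inb[of h]] by simp
  define q where "q = 1 - c0 d * (1 - R)"
  have q1: "q < 1" using c0_pos[OF d] R by (simp add: q_def)
  have q0: "0 \<le> q"
  proof -
    have "0 \<le> integral {0..R} (\<lambda>r'. green_neum d 0 r')"
      by (rule Henstock_Kurzweil_Integration.integral_nonneg)
         (use R in \<open>auto intro!: integrable_continuous_interval gcomp[OF d] continuous_intros g_nonneg[OF d]\<close>)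
    also have "\<dots> \<le> q" unfolding q_def by (rule Kbound[OF d]) (use R in auto)
    finally show ?thesis .
  qed
  have contr: "dist (T h1) (T h2) \<le> q * dist h1 h2" for h1 h2
  proof (rule dist_bound)
    fix x
    define y where "y = cl x"
    have y: "y \<in> {0..1}" using cl[of x] R by (auto simp: y_def)
    have cg: "continuous_on {0..R} (\<lambda>r'. green_neum d y r')"
      by (rule gcomp[OF d]) (use y R in \<open>auto intro: continuous_intros\<close>)
    have i1: "(\<lambda>r'. green_neum d y r' * (apply_bcontfun h1 r' - apply_bcontfun h2 r')) integrable_on {0..R}"
      by (rule integrable_continuous_interval) (intro continuous_intros cg continuous_on_apply_bcontfun)
    have i2: "(\<lambda>r'. green_neum d y r' * dist h1 h2) integrable_on {0..R}"
      by (rule integrable_continuous_interval) (intro continuous_intros cg continuous_on_apply_bcontfun)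
    have "dist (T h1 x) (T h2 x) = \<bar>integral {0..R} (\<lambda>r'. green_neum d y r' * (apply_bcontfun h1 r' - apply_bcontfun h2 r'))\<bar>"
    proof -
      have "T h1 x - T h2 x = integral {0..R} (\<lambda>r'. green_neum d y r' * apply_bcontfun h1 r') - integral {0..R} (\<lambda>r'. green_neum d y r' * apply_bcontfun h2 r')"
        unfolding Tap Psi_def y_def by simp
      also have "\<dots> = integral {0..R} (\<lambda>r'. green_neum d y r' * (apply_bcontfun h1 r' - apply_bcontfun h2 r'))"
        unfolding right_diff_distrib
        by (rule Henstock_Kurzweil_Integration.integral_diff[symmetric])
           (auto intro!: integrable_continuous_interval continuous_intros cg continuous_on_apply_bcontfun)
      finally show ?thesis by (simp add: dist_real_def)
    qed
    also have "\<dots> \<le> integral {0..R} (\<lambda>r'. green_neum d y r' * dist h1 h2)"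
    proof -
      have "norm (integral {0..R} (\<lambda>r'. green_neum d y r' * (apply_bcontfun h1 r' - apply_bcontfun h2 r')))
            \<le> integral {0..R} (\<lambda>r'. green_neum d y r' * dist h1 h2)"
      proof (rule Henstock_Kurzweil_Integration.integral_norm_bound_integral[OF i1 i2])
        fix r' assume r': "r' \<in> {0..R}"
        have "\<bar>apply_bcontfun h1 r' - apply_bcontfun h2 r'\<bar> \<le> dist h1 h2"
          using dist_bounded[of h1 r' h2] by (simp add: dist_real_def)
        thus "norm (green_neum d y r' * (apply_bcontfun h1 r' - apply_bcontfun h2 r')) \<le> green_neum d y r' * dist h1 h2"
          using g_nonneg[OF d, of y r'] by (simp add: abs_mult mult_left_mono)
      qed
      thus ?thesis by simp
    qed
    also have "\<dots> = integral {0..R} (\<lambda>r'. green_neum d y r') * dist h1 h2" by simp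
    also have "\<dots> \<le> q * dist h1 h2"
      by (rule mult_right_mono) (unfold q_def, rule Kbound[OF d], use R y in auto)
    finally show "dist (T h1 x) (T h2 x) \<le> q * dist h1 h2" .
  qed
  obtain h where hT: "T h = h" using banach_fix_type[OF q0 q1, of T] contr by auto
  have hfix: "apply_bcontfun h r = Psi h (cl r)" for r using Tap[of h r] hT by simp
  define \<rho> where "\<rho> r = (if 0 \<le> r \<and> r \<le> R then apply_bcontfun h r else 0)" for r
  have ih: "integral {0..R} (\<lambda>r'. green_neum d r r' * apply_bcontfun h r') = integral {0..R} (\<lambda>r'. green_neum d r r' * \<rho> r')" for r
    by (rule integral_cong) (simp add: \<rho>_def)
  have \<rho>eq: "\<rho> r = a * green_neum d r 0 + integral {0..R} (\<lambda>r'. green_neum d r r' * \<rho> r')" if r: "r \<in> {0..R}" for r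
    using hfix[of r] clid[OF r] r unfolding Psi_def ih by (simp add: \<rho>_def)
  have c\<rho>: "continuous_on {0..R} \<rho>"
    by (rule continuous_on_cong[THEN iffD1, OF refl _ continuous_on_apply_bcontfun[of _ h]]) (simp add: \<rho>_def)
  have z\<rho>: "\<And>r. r \<in> {R<..1} \<Longrightarrow> \<rho> r = 0" by (simp add: \<rho>_def)
  have nn0: "0 \<le> \<rho> r" if "r \<in> {0..R}" for r
  proof (rule minprin[OF d _ _ c\<rho> _ that])
    fix r assume r: "r \<in> {0..R}"
    have "0 \<le> a * green_neum d r 0" using a g_nonneg[OF d] by simp
    thus "integral {0..R} (\<lambda>r'. green_neum d r r' * \<rho> r') \<le> \<rho> r" using \<rho>eq[OF r] by linarith
  qed (use R in auto)
  have nn: "0 \<le> \<rho> r" for r using nn0[of r] by (cases "r \<le> R"; cases "0 \<le> r") (auto simp: \<rho>_def)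
  define F where "F = conv_neum d (a, \<rho>)"
  define I where "I r = integral {0..R} (\<lambda>r'. green_neum d r r' * \<rho> r')" for r
  have Feq: "F r = a * green_neum d r 0 + I r" if r: "r \<in> {0..1}" for r
    unfolding F_def conv_neum_def I_def using int_cut[OF d _ _ r c\<rho> z\<rho>] R by simp
  have Ic: "continuous_on {0..1} I" unfolding I_def by (rule intcont[OF d _ _ c\<rho>]) (use R in auto)
  have Fc0: "continuous_on {0..1} (\<lambda>r. a * green_neum d r 0 + I r)"
    by (intro continuous_intros Ic gcomp[OF d]) auto
  have Fc: "continuous_on {0..1} F" using continuous_on_cong[THEN iffD2, OF refl _ Fc0] Feq by simp
  have Fint: "F integrable_on {u..v}" if "0 \<le> u" "v \<le> 1" for u v
    by (rule integrable_continuous_interval, rule continuous_on_subset[OF Fc]) (use that in auto)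
  have Ipos: "0 \<le> I r" if "r \<in> {0..1}" for r
    unfolding I_def
    by (rule Henstock_Kurzweil_Integration.integral_nonneg)
       (auto intro!: integrable_continuous_interval continuous_intros gcomp[OF d] c\<rho> mult_nonneg_nonneg g_nonneg[OF d] nn
             simp: that[simplified] intro: order_trans[OF _ R(2)[THEN less_imp_le]])
  have Flow: "a * c0 d \<le> F r" if r: "r \<in> {0..1}" for r
  proof -
    have "a * c0 d \<le> a * green_neum d r 0"
      using g_lower[OF d r, of 0] a by (intro mult_left_mono) auto
    thus ?thesis using Feq[OF r] Ipos[OF r] by linarith
  qed
  have F\<rho>: "F r = \<rho> r" if r: "r \<in> {0..R}" for r
    using Feq[of r] \<rho>eq[OF r] r R unfolding I_def by auto
  have mass: "integral {0..1} F = a + integral {0..R} \<rho>"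
  proof -
    have "integral {0..1} F = integral {0..1} (\<lambda>r. a * green_neum d r 0 + I r)"
      by (rule integral_cong) (rule Feq)
    also have "\<dots> = integral {0..1} (\<lambda>r. a * green_neum d r 0) + integral {0..1} I"
      by (rule Henstock_Kurzweil_Integration.integral_add)
         (use integrable_continuous_interval[OF Ic] in \<open>auto intro!: integrable_continuous_interval continuous_intros gcomp[OF d]\<close>)
    also have "integral {0..1} (\<lambda>r. a * green_neum d r 0) = a"
      using g_int_r[OF d, of 0] by simp
    also have "integral {0..1} I = integral {0..R} \<rho>"
    proof -
      have cc: "continuous_on (cbox (0, 0) (1, R)) (\<lambda>(x, y). green_neum d x y * \<rho> y)"
      proof -
        have c1: "continuous_on ({0..1} \<times> {0..R}) (\<lambda>y. green_neum d (fst y) (snd y))"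
          by (rule gcomp[OF d]) (use R in \<open>auto intro: continuous_intros\<close>)
        have c2: "continuous_on ({0..1} \<times> {0..R}) (\<lambda>y. \<rho> (snd y))"
          by (rule continuous_on_compose2[OF c\<rho> continuous_on_snd]) auto
        show ?thesis unfolding cbox_Pair_eq unfolding cbox_interval using continuous_on_mult[OF c1 c2]
          by (simp add: case_prod_beta)
      qed
      have "integral {0..1} I = integral (cbox 0 1) (\<lambda>x. integral (cbox 0 R) (\<lambda>y. green_neum d x y * \<rho> y))"
        unfolding cbox_interval by (rule arg_cong[where f="integral {0..1}"]) (simp add: I_def fun_eq_iff)
      also have "\<dots> = integral (cbox 0 R) (\<lambda>y. integral (cbox 0 1) (\<lambda>x. green_neum d x y * \<rho> y))"
        by (rule integral_swap_continuous[OF cc])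
      also have "\<dots> = integral {0..R} (\<lambda>y. integral {0..1} (\<lambda>x. green_neum d x y) * \<rho> y)"
        by (simp add: cbox_interval)
      also have "\<dots> = integral {0..R} \<rho>"
        by (rule integral_cong) (use g_int_r[OF d] R in auto)
      finally show ?thesis .
    qed
    finally show ?thesis .
  qed
  have i\<rho>: "integral {0..R} \<rho> = integral {0..R} F" by (rule integral_cong) (simp add: F\<rho>)
  have tail: "integral {R..1} F = a"
    using Henstock_Kurzweil_Integration.integral_combine[of 0 R 1 F] Fint[of 0 1] R mass i\<rho> by simp
  have \<rho>pos: "0 < integral {0..R} \<rho>"
  proof -
    have "(R - 0) * (a * c0 d) \<le> integral {0..R} F"
      by (rule int_pos_lower) (use R Fint[of 0 R] Flow in auto)
    moreover have "0 < R * (a * c0 d)" using R a c0_pos[OF d] by simp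
    ultimately show ?thesis using i\<rho> by simp
  qed
  have strict: "integral {v..1} F < integral {u..1} F" if "0 \<le> u" "u < v" "v \<le> 1" for u v
  proof -
    have "integral {u..v} F + integral {v..1} F = integral {u..1} F"
      by (rule Henstock_Kurzweil_Integration.integral_combine) (use that Fint[of u 1] in auto)
    moreover have "(v - u) * (a * c0 d) \<le> integral {u..v} F"
      by (rule int_pos_lower) (use that Fint[of u v] Flow in auto)
    moreover have "0 < (v - u) * (a * c0 d)" using that a c0_pos[OF d] by simp
    ultimately show ?thesis by linarith
  qed
  have cp: "cut_point a F = R"
    unfolding cut_point_def
  proof (rule the_equality)
    show "R \<in> {0..1} \<and> integral {R..1} F = a" using R tail by auto
    fix R' assume R': "R' \<in> {0..1} \<and> integral {R'..1} F = a"
    show "R' = R"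
    proof (rule ccontr)
      assume "R' \<noteq> R"
      hence "R' < R \<or> R < R'" by auto
      thus False using strict[of R' R] strict[of R R'] R' R tail by auto
    qed
  qed
  have "fixed_profile j d R \<rho>"
    unfolding fixed_profile_def
  proof (intro conjI ballI)
    show "0 \<le> \<rho> r" for r by (rule nn)
    show "continuous_on {0..R} \<rho>" by (rule c\<rho>)
    show "\<rho> r = 0" if "r \<in> {R<..1}" for r using that by (rule z\<rho>)
    show "j * d < integral {0..1} (conv_neum d (j * d, \<rho>))"
      using mass \<rho>pos unfolding F_def a_def by simp
    show "cut_point (j * d) (conv_neum d (j * d, \<rho>)) = R" using cp unfolding F_def a_def .
    show "fst (S_minus j d (j * d, \<rho>)) = j * d" by (simp add: S_minus_def cut_paste_def)
    fix r :: real assume r: "r \<in> {0..1}"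
    show "snd (S_minus j d (j * d, \<rho>)) r = \<rho> r"
      using cp F\<rho>[of r] r unfolding S_minus_def cut_paste_def F_def a_def
      by (auto simp: \<rho>_def)
  qed
  thus ?thesis by blast
qed


theorem theorem3p1:
  fixes j :: real
  assumes "j > 0"
  shows "(\<forall>R\<in>{0<..<1}. \<exists>\<delta>0>0. \<forall>\<delta>. 0 < \<delta> \<and> \<delta> < \<delta>0 \<longrightarrow>
            (\<exists>\<rho>. fixed_profile j \<delta> R \<rho> \<and>
                 (\<forall>\<rho>'. fixed_profile j \<delta> R \<rho>' \<longrightarrow> (\<forall>r\<in>{0..1}. \<rho>' r = \<rho> r))))
       \<and> (\<forall>R1\<in>{0<..<1}. \<forall>R2\<in>{0<..<1}. R1 \<le> R2 \<longrightarrow>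
            (\<exists>\<delta>0>0. \<forall>\<delta>. 0 < \<delta> \<and> \<delta> < \<delta>0 \<longrightarrow>
              (\<forall>\<rho>1 \<rho>2. fixed_profile j \<delta> R1 \<rho>1 \<longrightarrow> fixed_profile j \<delta> R2 \<rho>2 \<longrightarrow>
                 (\<forall>r\<in>{0..1}. \<rho>1 r \<le> \<rho>2 r))))"
proof (intro conjI ballI impI)
  fix R :: real assume R: "R \<in> {0<..<1}"
  show "\<exists>\<delta>0>0. \<forall>\<delta>. 0 < \<delta> \<and> \<delta> < \<delta>0 \<longrightarrow>
            (\<exists>\<rho>. fixed_profile j \<delta> R \<rho> \<and>
                 (\<forall>\<rho>'. fixed_profile j \<delta> R \<rho>' \<longrightarrow> (\<forall>r\<in>{0..1}. \<rho>' r = \<rho> r)))"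
  proof (intro exI[of _ 1] conjI allI impI)
    fix \<delta> :: real assume \<delta>: "0 < \<delta> \<and> \<delta> < 1"
    obtain \<rho> where fp: "fixed_profile j \<delta> R \<rho>"
      using exists_fp[OF assms, of \<delta> R] \<delta> R by auto
    show "\<exists>\<rho>. fixed_profile j \<delta> R \<rho> \<and>
                 (\<forall>\<rho>'. fixed_profile j \<delta> R \<rho>' \<longrightarrow> (\<forall>r\<in>{0..1}. \<rho>' r = \<rho> r))"
    proof (intro exI[of _ \<rho>] conjI allI impI ballI fp)
      fix \<rho>' and r :: real assume fp': "fixed_profile j \<delta> R \<rho>'" and r: "r \<in> {0..1}"
      have "\<rho>' r \<le> \<rho> r" by (rule compare[OF assms _ _ _ _ fp' fp r]) (use \<delta> R in auto)
      moreover have "\<rho> r \<le> \<rho>' r" by (rule compare[OF assms _ _ _ _ fp fp' r]) (use \<delta> R in auto)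
      ultimately show "\<rho>' r = \<rho> r" by simp
    qed
  qed simp
next
  fix R1 R2 :: real assume R1: "R1 \<in> {0<..<1}" and R2: "R2 \<in> {0<..<1}" and le: "R1 \<le> R2"
  show "\<exists>\<delta>0>0. \<forall>\<delta>. 0 < \<delta> \<and> \<delta> < \<delta>0 \<longrightarrow>
              (\<forall>\<rho>1 \<rho>2. fixed_profile j \<delta> R1 \<rho>1 \<longrightarrow> fixed_profile j \<delta> R2 \<rho>2 \<longrightarrow>
                 (\<forall>r\<in>{0..1}. \<rho>1 r \<le> \<rho>2 r))"
  proof (intro exI[of _ 1] conjI allI impI ballI)
    fix \<delta> and \<rho>1 \<rho>2 :: "real \<Rightarrow> real" and r :: real assume \<delta>: "0 < \<delta> \<and> \<delta> < 1" and f1: "fixed_profile j \<delta> R1 \<rho>1"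
      and f2: "fixed_profile j \<delta> R2 \<rho>2" and r: "r \<in> {0..1}"
    show "\<rho>1 r \<le> \<rho>2 r" by (rule compare[OF assms _ _ _ _ f1 f2 r]) (use \<delta> R1 R2 le in auto)
  qed simp
qed

end
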